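(* Every Abel sequentially compact subset of $\mathbb{R}$ is bounded.
   Context: A sequence $(p_n)_{n\ge0}$ is Abel convergent to $\ell$ if $\sum_{k=0}^{\infty}p_k x^k$ converges for every $0\le x<1$ and $\lim_{x\to 1^-}(1-x)\sum_{k=0}^{\infty}p_k x^k=\ell$. A subset $F\subseteq\mathbb{R}$ is Abel sequentially compact if every sequence of points of $F$ has a subsequence Abel convergent to a limit belonging to $F$. *)

theory Defs
  imports "HOL-Analysis.Analysis"
begin

definition abel_convergent :: "(nat \<Rightarrow> real) \<Rightarrow> real \<Rightarrow> bool" where
  "abel_convergent p l \<longleftrightarrow>
     (\<forall>x::real. 0 \<le> x \<and> x < 1 \<longrightarrow> summable (\<lambda>k. p k * x ^ k)) \<and>
     ((\<lambda>x. (1 - x) * (\<Sum>k. p k * x ^ k)) \<longlongrightarrow> l) (at_left 1)"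

definition abel_seq_compact :: "real set \<Rightarrow> bool" where
  "abel_seq_compact F \<longleftrightarrow>
     (\<forall>a::nat \<Rightarrow> real. (\<forall>n. a n \<in> F) \<longrightarrow>
        (\<exists>(r::nat \<Rightarrow> nat) l. strict_mono r \<and> l \<in> F \<and> abel_convergent (a \<circ> r) l))"

end

theory Submission
  imports Defs
begin

theorem theorem16:
  fixes F :: "real set"
  assumes "abel_seq_compact F"
  shows "bounded F"
proof (rule ccontr)
  assume nb: "\<not> bounded F"
  have "\<forall>n. \<exists>y\<in>F. (2::real)^n \<le> \<bar>y\<bar>"
  proof
    fix n :: nat
    show "\<exists>y\<in>F. (2::real)^n \<le> \<bar>y\<bar>"
      using nb unfolding bounded_iff by (metis linorder_not_le less_imp_le real_norm_def)
  qed
  then obtain a where a: "\<And>n. a n \<in> F" "\<And>n. (2::real)^n \<le> \<bar>a n\<bar>" by metis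
  then obtain r l where r: "strict_mono r" and ac: "abel_convergent (a \<circ> r) l"
    using assms unfolding abel_seq_compact_def by blast
  have "summable (\<lambda>k. (a \<circ> r) k * (1/2::real) ^ k)"
    using ac unfolding abel_convergent_def by auto
  hence lim: "(\<lambda>k. (a \<circ> r) k * (1/2::real) ^ k) \<longlonglongrightarrow> 0"
    by (rule summable_LIMSEQ_zero)
  have ge: "1 \<le> \<bar>(a \<circ> r) k * (1/2::real) ^ k\<bar>" for k
  proof -
    have "k \<le> r k" using r by (rule strict_mono_imp_increasing)
    hence "(2::real)^k \<le> 2^(r k)" by (rule power_increasing) simp
    also have "\<dots> \<le> \<bar>a (r k)\<bar>" by (rule a(2))
    finally have "(2::real)^k \<le> \<bar>a (r k)\<bar>" .
    hence "(2::real)^k * (1/2)^k \<le> \<bar>a (r k)\<bar> * (1/2)^k"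
      by (intro mult_right_mono) auto
    moreover have "(2::real)^k * (1/2)^k = 1" by (simp add: power_mult_distrib[symmetric])
    ultimately show ?thesis by (simp add: abs_mult)
  qed
  from LIMSEQ_D[OF lim, of 1] obtain N where "\<And>n. n \<ge> N \<Longrightarrow> norm ((a \<circ> r) n * (1/2::real) ^ n - 0) < 1"
    by auto
  from this[of N] ge[of N] show False by simp
qed

end
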